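(* The space $\mathcal O_2$ is homotopy equivalent to the circle $S^1$.
   Context: A polynomial knot is a map $\phi:\mathbb R\to\mathbb R^3$ with real polynomial components which is a smooth embedding ($\phi$ injective and $\phi'(t)\neq0$ for all $t$). $\mathcal A_2$ is the set of polynomial maps $t\mapsto(a_0,\ b_0+b_1t,\ c_0+c_1t+c_2t^2)$ with $(a_0,b_0,b_1,c_0,c_1,c_2)\in\mathbb R^6$ arbitrary, topologized by identifying it with $\mathbb R^6$ via its coefficient vector. $\mathcal O_2$ is the subspace of $\mathcal A_2$ consisting of polynomial knots. *)

theory Defs
  imports "HOL-Analysis.Analysis" "HOL-Computational_Algebra.Polynomial"
begin

definition polynomial_knot :: "(real \<Rightarrow> real \<times> real \<times> real) \<Rightarrow> bool" where
  "polynomial_knot \<phi> \<longleftrightarrow>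
     (\<exists>p q r :: real poly. \<phi> = (\<lambda>t. (poly p t, poly q t, poly r t))) \<and>
     inj \<phi> \<and>
     (\<forall>t. \<exists>v. (\<phi> has_vector_derivative v) (at t) \<and> v \<noteq> 0)"

definition A2_map :: "real \<times> real \<times> real \<times> real \<times> real \<times> real \<Rightarrow> real \<Rightarrow> real \<times> real \<times> real" where
  "A2_map = (\<lambda>(a0, b0, b1, c0, c1, c2) t. (a0, b0 + b1 * t, c0 + c1 * t + c2 * t^2))"

definition O2 :: "(real \<times> real \<times> real \<times> real \<times> real \<times> real) set" where
  "O2 = {x. polynomial_knot (A2_map x)}"

end

theory Submission
  imports Defs
begin

lemma O2_char:
  "(a0,b0,b1,c0,c1,c2) \<in> O2 \<longleftrightarrow> b1 \<noteq> 0 \<or> (c2 = 0 \<and> c1 \<noteq> 0)"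
proof
  assume "(a0,b0,b1,c0,c1,c2) \<in> O2"
  then have inj: "inj (\<lambda>t::real. (a0, b0 + b1 * t, c0 + c1 * t + c2 * t^2))"
    by (simp add: O2_def polynomial_knot_def A2_map_def)
  show "b1 \<noteq> 0 \<or> (c2 = 0 \<and> c1 \<noteq> 0)"
  proof (rule ccontr)
    assume h: "\<not> (b1 \<noteq> 0 \<or> (c2 = 0 \<and> c1 \<noteq> 0))"
    then have b: "b1 = 0" by auto
    show False
    proof (cases "c2 = 0")
      case True
      then have "c1 = 0" using h by auto
      have "(0::real) = 1" by (rule injD[OF inj]) (simp add: b True \<open>c1 = 0\<close>)
      then show False by simp
    next
      case False
      define t where "t = -c1/(2*c2) + 1"
      define s where "s = -c1/(2*c2) - 1"
      have "c0 + c1 * t + c2 * t^2 = c0 + c1 * s + c2 * s^2"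
        using False unfolding t_def s_def by (simp add: field_simps power2_eq_square)
      then have "t = s" by (intro injD[OF inj]) (simp add: b)
      then show False unfolding t_def s_def by simp
    qed
  qed
next
  assume h: "b1 \<noteq> 0 \<or> (c2 = 0 \<and> c1 \<noteq> 0)"
  have p: "(\<lambda>t::real. (a0, b0 + b1 * t, c0 + c1 * t + c2 * t^2)) =
      (\<lambda>t. (poly [:a0:] t, poly [:b0,b1:] t, poly [:c0,c1,c2:] t))"
    by (auto simp: power2_eq_square algebra_simps)
  have i: "inj (\<lambda>t::real. (a0, b0 + b1 * t, c0 + c1 * t + c2 * t^2))"
  proof (rule injI)
    fix x y :: real
    assume e: "(a0, b0 + b1 * x, c0 + c1 * x + c2 * x^2) = (a0, b0 + b1 * y, c0 + c1 * y + c2 * y^2)"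
    then have e1: "b1 * x = b1 * y" and e2: "c1 * x + c2 * x^2 = c1 * y + c2 * y^2" by auto
    show "x = y"
    proof (cases "b1 = 0")
      case False then show ?thesis using e1 by simp
    next
      case True then have "c2 = 0" "c1 \<noteq> 0" using h by auto
      then show ?thesis using e2 by simp
    qed
  qed
  have d: "\<exists>v. ((\<lambda>t::real. (a0, b0 + b1 * t, c0 + c1 * t + c2 * t^2)) has_vector_derivative v) (at t) \<and> v \<noteq> 0" for t
  proof (intro exI conjI)
    show "((\<lambda>t::real. (a0, b0 + b1 * t, c0 + c1 * t + c2 * t^2)) has_vector_derivative (0, b1, c1 + 2*c2*t)) (at t)"
      by (intro has_vector_derivative_Pair) (auto intro!: derivative_eq_intros simp: has_real_derivative_iff_has_vector_derivative[symmetric])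
    show "(0::real, b1, c1 + 2*c2*t) \<noteq> 0" using h by (auto simp: zero_prod_def)
  qed
  show "(a0,b0,b1,c0,c1,c2) \<in> O2"
    unfolding O2_def polynomial_knot_def A2_map_def using p i d by (auto simp del: poly_pCons)
qed

definition FF :: "real \<times> real \<times> real \<times> real \<times> real \<times> real \<Rightarrow> complex" where
  "FF x = (complex_of_real (fst (snd (snd x))) + \<i> * complex_of_real (fst (snd (snd (snd (snd x))))))
          / complex_of_real (cmod (complex_of_real (fst (snd (snd x))) + \<i> * complex_of_real (fst (snd (snd (snd (snd x)))))))"

definition GG :: "complex \<Rightarrow> real \<times> real \<times> real \<times> real \<times> real \<times> real" where
  "GG z = (0, 0, Re z, 0, Im z, 0)"

lemma O2_nz: "x \<in> O2 \<Longrightarrow> complex_of_real (fst (snd (snd x))) + \<i> * complex_of_real (fst (snd (snd (snd (snd x))))) \<noteq> 0"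
  by (cases x) (auto simp: O2_char complex_eq_iff)

lemma cont_FF: "continuous_on O2 FF"
  unfolding FF_def
  by (intro continuous_intros) (auto dest: O2_nz)

lemma FF_sphere: "x \<in> O2 \<Longrightarrow> FF x \<in> sphere 0 1"
  unfolding FF_def using O2_nz[of x] by (simp add: norm_divide)

lemma cont_GG: "continuous_on UNIV GG"
  unfolding GG_def by (intro continuous_intros)

lemma GG_O2: "norm z = 1 \<Longrightarrow> GG z \<in> O2"
  unfolding GG_def O2_char by (cases z) (auto simp: norm_complex_def)

lemma FG: "norm z = 1 \<Longrightarrow> FF (GG z) = z"
proof -
  assume "norm z = 1"
  moreover have "complex_of_real (Re z) + \<i> * complex_of_real (Im z) = z" by (simp add: complex_eq_iff)
  ultimately show ?thesis unfolding FF_def GG_def by simp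
qed

lemma seg: assumes "x \<in> O2" shows "closed_segment (GG (FF x)) x \<subseteq> O2"
proof
  fix y assume "y \<in> closed_segment (GG (FF x)) x"
  then obtain u where u: "0 \<le> u" "u \<le> 1" and y: "y = (1 - u) *\<^sub>R GG (FF x) + u *\<^sub>R x"
    unfolding closed_segment_def by auto
  obtain a0 b0 b1 c0 c1 c2 where x: "x = (a0,b0,b1,c0,c1,c2)" by (cases x) auto
  define n where "n = cmod (complex_of_real b1 + \<i> * complex_of_real c1)"
  have z: "complex_of_real b1 + \<i> * complex_of_real c1 \<noteq> 0" using O2_nz[OF assms] x by simp
  then have n: "n > 0" unfolding n_def by simp
  have GF: "GG (FF x) = (0,0,b1/n,0,c1/n,0)"
    unfolding GG_def FF_def x n_def by (simp add: complex_eq_iff)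
  define k where "k = (1-u)/n + u"
  have k: "k > 0" unfolding k_def using u n
    by (cases "u = 0") (auto intro: add_nonneg_pos add_pos_nonneg)
  have yy: "y = (u*a0, u*b0, k*b1, u*c0, k*c1, u*c2)"
    unfolding y GF unfolding x k_def by (simp add: algebra_simps)
  have h: "b1 \<noteq> 0 \<or> (c2 = 0 \<and> c1 \<noteq> 0)" using assms x O2_char by simp
  show "y \<in> O2" unfolding yy O2_char using h k by auto
qed

theorem mainTheorem3:
  shows "O2 homotopy_eqv sphere (0::complex) 1"
  unfolding homotopy_equivalent_space_def
proof (intro exI conjI)
  show cF: "continuous_map (top_of_set O2) (top_of_set (sphere (0::complex) 1)) FF"
    using cont_FF FF_sphere by (auto simp: continuous_map_subtopology_eu)
  show cG: "continuous_map (top_of_set (sphere (0::complex) 1)) (top_of_set O2) GG"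
    using continuous_on_subset[OF cont_GG] GG_O2 by (auto simp: continuous_map_subtopology_eu)
  show "homotopic_with (\<lambda>x. True) (top_of_set O2) (top_of_set O2) (GG \<circ> FF) id"
  proof (rule homotopic_with_linear)
    show "continuous_on O2 (GG \<circ> FF)"
      using continuous_on_compose[OF cont_FF continuous_on_subset[OF cont_GG]] by auto
    show "continuous_on O2 id" by (rule continuous_on_id')
  qed (use seg in auto)
  show "homotopic_with (\<lambda>x. True) (top_of_set (sphere (0::complex) 1)) (top_of_set (sphere 0 1)) (FF \<circ> GG) id"
    by (rule homotopic_with_equal) (use continuous_map_compose[OF cG cF] in \<open>auto simp: FG\<close>)
qed

end
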